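(* Let $p>1$ be an integer and let $u^{(p)}$ be the fixed point of the substitution $\varphi_p(L)=L^pS$, $\varphi_p(S)=M$, $\varphi_p(M)=L^{p-1}S$. Then (i) each occurrence of $S$ in $u^{(p)}$ is preceded by $L$ and followed either by $L$ or by $M$; (ii) each occurrence of $M$ in $u^{(p)}$ is preceded by $S$ and followed by $L$.
   Context: $u^{(p)}=\lim_{n\to\infty}\varphi_p^n(L)$ is the unique infinite word over $\{L,S,M\}$ with $\varphi_p(u^{(p)})=u^{(p)}$. *)

theory Defs
  imports Main
begin

datatype letter = L | S | M

fun phi :: "nat \<Rightarrow> letter \<Rightarrow> letter list" where
  "phi p L = replicate p L @ [S]"
| "phi p S = [M]"
| "phi p M = replicate (p - 1) L @ [S]"

definition phi_word :: "nat \<Rightarrow> letter list \<Rightarrow> letter list" where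
  "phi_word p w = concat (map (phi p) w)"

text \<open>The infinite word u^(p) = lim_{n\<rightarrow>\<infinity>} phi_p^n(L), as a function nat \<Rightarrow> letter:
  its n-th letter is the letter that the n-th position of phi_p^k(L) eventually
  (for all large k) carries.\<close>
definition u :: "nat \<Rightarrow> nat \<Rightarrow> letter" where
  "u p n = (THE c. \<exists>K. \<forall>k\<ge>K. n < length ((phi_word p ^^ k) [L]) \<and> (phi_word p ^^ k) [L] ! n = c)"

end

theory Submission
  imports Defs
begin

fun allowed :: "letter \<Rightarrow> letter \<Rightarrow> bool" where
  "allowed S S = False" | "allowed M S = False" | "allowed M M = False"
| "allowed L M = False" | "allowed _ _ = True"

fun ok :: "letter list \<Rightarrow> bool" where
  "ok (a # b # w) = (allowed a b \<and> ok (b # w))"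
| "ok _ = True"

lemma ok_append:
  "ok (xs @ ys) = (ok xs \<and> ok ys \<and> (xs \<noteq> [] \<longrightarrow> ys \<noteq> [] \<longrightarrow> allowed (last xs) (hd ys)))"
proof (induction xs rule: ok.induct)
  case ("2_2" v) then show ?case by (cases ys) auto
qed auto

lemma ok_rep: "ok (replicate n L @ [S])"
  by (induction n) (auto simp: neq_Nil_conv, case_tac n, auto)

lemma ok_nth: "ok w \<Longrightarrow> Suc i < length w \<Longrightarrow> allowed (w!i) (w!Suc i)"
proof (induction w arbitrary: i rule: ok.induct)
  case (1 a b w)
  then show ?case by (cases i) auto
qed auto

lemma phi_ne: "phi p a \<noteq> []"
  by (cases a) auto

lemma phi_ok: "ok (phi p a)"
  by (cases a) (auto simp: ok_rep)

lemma phi_word_Cons: "phi_word p (a # w) = phi p a @ phi_word p w"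
  by (simp add: phi_word_def)

lemma phi_word_ne: "w \<noteq> [] \<Longrightarrow> hd (phi_word p w) = hd (phi p (hd w))"
  by (cases w) (auto simp: phi_word_Cons phi_ne)

lemma junction: "p > 1 \<Longrightarrow> allowed a b \<Longrightarrow> allowed (last (phi p a)) (hd (phi p b))"
  by (cases a; cases b) (auto simp: hd_append)

lemma phi_word_ok: "p > 1 \<Longrightarrow> ok w \<Longrightarrow> ok (phi_word p w)"
proof (induction w rule: ok.induct)
  case (1 a b w)
  then show ?case
    by (auto simp: phi_word_Cons[of p a] ok_append phi_ok phi_ne phi_word_ne junction
        simp del: phi.simps)
next
  case ("2_1") then show ?case by (simp add: phi_word_def)
next
  case ("2_2" a) then show ?case by (simp add: phi_word_def phi_ok)
qed

definition W :: "nat \<Rightarrow> nat \<Rightarrow> letter list" where "W p k = (phi_word p ^^ k) [L]"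

lemma W_Suc: "W p (Suc k) = phi_word p (W p k)"
  by (simp add: W_def)

definition pre :: "letter list \<Rightarrow> letter list \<Rightarrow> bool" where "pre xs ys = (\<exists>t. ys = xs @ t)"

lemma phi_word_prefix: "pre xs ys \<Longrightarrow> pre (phi_word p xs) (phi_word p ys)"
  by (auto simp: pre_def phi_word_def)

lemma W_prefix_Suc: "p > 0 \<Longrightarrow> pre (W p k) (W p (Suc k))"
proof (induction k)
  case 0
  then show ?case by (cases p) (auto simp: W_def phi_word_def pre_def)
next
  case (Suc k)
  then show ?case using phi_word_prefix by (simp add: W_Suc)
qed

lemma W_prefix: "k \<le> k' \<Longrightarrow> p > 0 \<Longrightarrow> pre (W p k) (W p k')"
proof (induction k' rule: dec_induct)
  case base then show ?case by (simp add: pre_def)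
next
  case (step n) then show ?case using W_prefix_Suc[of p n] unfolding pre_def by auto
qed

lemma W_hd: "p > 0 \<Longrightarrow> W p k \<noteq> [] \<and> hd (W p k) = L"
proof (induction k)
  case 0 then show ?case by (simp add: W_def)
next
  case (Suc k)
  then obtain w where "W p k = L # w" by (cases "W p k") auto
  then show ?case using Suc.prems by (cases p) (simp_all add: W_Suc phi_word_Cons)
qed

lemma W_len: "p > 0 \<Longrightarrow> length (W p k) \<ge> Suc k"
proof (induction k)
  case 0 then show ?case by (simp add: W_def)
next
  case (Suc k)
  then obtain w where w: "W p k = L # w" using W_hd[OF Suc.prems(1), of k] by (cases "W p k") auto
  have "length (phi_word p w) \<ge> length w"
  proof (induction w)
    case (Cons a w)
    have "length (phi p a) > 0" using phi_ne[of p a] by simp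
    then show ?case using Cons unfolding phi_word_def
      by (simp only: list.map concat.simps length_append list.size)
  qed (simp add: phi_word_def)
  then show ?case using Suc w by (simp add: W_Suc phi_word_Cons)
qed

lemma W_ok: "p > 1 \<Longrightarrow> ok (W p k)"
  by (induction k) (auto simp: W_def phi_word_ok)

lemma u_eq: assumes "p > 0" "n < length (W p k)" shows "u p n = W p k ! n"
proof -
  have key: "W p k' ! n = W p k ! n" if "n < length (W p k')" for k'
  proof (cases "k \<le> k'")
    case True then show ?thesis using W_prefix[OF True assms(1)] assms(2)
      by (metis nth_append pre_def)
  next
    case False then show ?thesis using W_prefix[OF _ assms(1), of k' k] that
      by (metis nat_le_linear nth_append pre_def)
  qed
  have "\<forall>k'\<ge>k. n < length (W p k') \<and> W p k' ! n = W p k ! n"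
    using W_prefix[OF _ assms(1)] assms(2) key unfolding pre_def
    by (metis length_append less_le_trans le_add1)
  then have ex: "\<exists>K. \<forall>k'\<ge>K. n < length (W p k') \<and> W p k' ! n = W p k ! n" by blast
  show ?thesis unfolding u_def W_def[symmetric]
  proof (rule the_equality)
    show "\<exists>K. \<forall>k'\<ge>K. n < length (W p k') \<and> W p k' ! n = W p k ! n" by (rule ex)
  next
    fix c assume "\<exists>K. \<forall>k'\<ge>K. n < length (W p k') \<and> W p k' ! n = c"
    then obtain K where "\<forall>k'\<ge>K. n < length (W p k') \<and> W p k' ! n = c" by blast
    then show "c = W p k ! n" using key by (metis le_refl)
  qed
qed

theorem mainTheorem3:
  fixes p :: nat
  assumes "p > 1"
  shows "(\<forall>i. u p i = S \<longrightarrow>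
            i > 0 \<and> u p (i - 1) = L \<and> (u p (i + 1) = L \<or> u p (i + 1) = M))
       \<and> (\<forall>i. u p i = M \<longrightarrow>
            i > 0 \<and> u p (i - 1) = S \<and> u p (i + 1) = L)"
proof -
  have p0: "p > 0" using assms by simp
  have loc: "i > 0 \<and> allowed (u p (i - 1)) (u p i) \<and> allowed (u p i) (u p (i + 1))"
    if "u p i \<noteq> L" for i
  proof -
    define w where "w = W p (Suc (Suc i))"
    have len: "Suc (Suc i) < length w" using W_len[OF p0, of "Suc (Suc i)"] unfolding w_def
      by linarith
    have okw: "ok w" using W_ok[OF assms] w_def by simp
    have h0: "w ! 0 = L" using W_hd[OF p0, of "Suc (Suc i)"] unfolding w_def by (metis hd_conv_nth)
    have ui: "u p j = w ! j" if "j \<le> Suc i" for j using u_eq[OF p0, of j] len that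
      unfolding w_def by simp
    have "i \<noteq> 0" using that h0 ui[of 0] by (cases i) auto
    moreover have "allowed (w ! (i - 1)) (w ! i)" using ok_nth[OF okw, of "i - 1"] len \<open>i \<noteq> 0\<close>
      by simp
    moreover have "allowed (w ! i) (w ! Suc i)" using ok_nth[OF okw, of i] len by simp
    ultimately show ?thesis using ui[of i] ui[of "i - 1"] ui[of "Suc i"] by simp
  qed
  show ?thesis
  proof (intro conjI allI impI)
    fix i assume h: "u p i = S"
    from loc[of i] h show "i > 0" "u p (i - 1) = L" "u p (i + 1) = L \<or> u p (i + 1) = M"
      by (cases "u p (i - 1)"; cases "u p (i + 1)"; simp)+
  next
    fix i assume h: "u p i = M"
    from loc[of i] h show "i > 0" "u p (i - 1) = S" "u p (i + 1) = L"
      by (cases "u p (i - 1)"; cases "u p (i + 1)"; simp)+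
  qed
qed

end
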